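(* Let $b,t>0$ and let $\omega_j,c_j$ ($j=1,\dots,s$) be complex numbers with $$\limsup_{n\to\infty} t^{-n}\Big|\sum_j c_j\omega_j^n\Big|\le b.$$ Then $\{1,\dots,s\}$ can be partitioned into disjoint sets $J_1,J_2$ such that $\sum_{j\in J_2}c_j\omega_j^n=0$ for all positive integers $n$, and $|\omega_j|\le t$ for each $j\in J_1$. *)

theory Defs
  imports "HOL-Analysis.Analysis"
begin

end

theory Submission
  imports Defs "HOL-Computational_Algebra.Polynomial"
begin

lemma annih:
  fixes t K :: real and \<omega> c :: "nat \<Rightarrow> complex" and J :: "nat set"
  assumes fin: "finite J" and t: "t > 0" and big: "\<forall>j\<in>J. norm (\<omega> j) > t"
    and ev: "eventually (\<lambda>n. norm (\<Sum>j\<in>J. c j * \<omega> j ^ n) \<le> K * t ^ n) sequentially"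
  shows "(\<Sum>j\<in>J. c j * \<omega> j ^ n) = 0"
proof -
  define a where "a = (\<lambda>n. \<Sum>j\<in>J. c j * \<omega> j ^ n)"
  define W where "W = \<omega> ` J"
  define D where "D = (\<lambda>z. \<Sum>j\<in>{j\<in>J. \<omega> j = z}. c j)"
  from ev obtain N where N: "\<And>n. n \<ge> N \<Longrightarrow> norm (a n) \<le> K * t ^ n"
    unfolding a_def eventually_sequentially by blast
  have Dz: "D z = 0" if zW: "z \<in> W" for z
  proof -
    define P where "P = (\<Prod>w\<in>W-{z}. [:-w,1:])"
    have finW: "finite W" using fin W_def by simp
    have Pz: "poly P z \<noteq> 0" unfolding P_def poly_prod using finW by auto
    have Pw: "poly P w = 0" if "w \<in> W" "w \<noteq> z" for w
      unfolding P_def poly_prod using finW that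
      by (auto intro!: prod_zero)
    have iden: "(\<Sum>i\<le>degree P. coeff P i * a (n+i)) = z ^ n * poly P z * D z" for n
    proof -
      have "(\<Sum>i\<le>degree P. coeff P i * a (n+i))
          = (\<Sum>j\<in>J. c j * \<omega> j ^ n * poly P (\<omega> j))"
        unfolding a_def poly_altdef
        by (simp add: sum_distrib_left sum_distrib_right power_add mult_ac sum.swap[where A=J])
      also have "\<dots> = (\<Sum>j\<in>{j\<in>J. \<omega> j = z}. c j * \<omega> j ^ n * poly P (\<omega> j))"
        using fin Pw W_def by (intro sum.mono_neutral_right) auto
      also have "\<dots> = z ^ n * poly P z * D z"
        unfolding D_def by (simp add: sum_distrib_left mult_ac)
      finally show ?thesis .
    qed
    define M where "M = K * (\<Sum>i\<le>degree P. norm (coeff P i) * t ^ i)"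
    have bnd: "norm (z ^ n * poly P z * D z) \<le> M * t ^ n" if "n \<ge> N" for n
    proof -
      have "norm (z ^ n * poly P z * D z) = norm (\<Sum>i\<le>degree P. coeff P i * a (n+i))"
        using iden by simp
      also have "\<dots> \<le> (\<Sum>i\<le>degree P. norm (coeff P i) * (K * t ^ (n+i)))"
        using N that by (auto intro!: order.trans[OF norm_sum] sum_mono mult_left_mono simp: norm_mult)
      also have "\<dots> = M * t ^ n"
        by (simp add: M_def sum_distrib_left sum_distrib_right power_add mult_ac)
      finally show ?thesis .
    qed
    show "D z = 0"
    proof (rule ccontr)
      assume "D z \<noteq> 0"
      define q where "q = norm (poly P z * D z)"
      have q: "q > 0" using Pz \<open>D z \<noteq> 0\<close> q_def by simp
      have zt: "norm z > t" using big zW W_def by auto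
      have r1: "norm z / t > 1" using zt t by simp
      obtain m where m: "M / q < (norm z / t) ^ m" using real_arch_pow[OF r1] by blast
      have "(norm z / t) ^ m \<le> (norm z / t) ^ (m + N)"
        using r1 by (intro power_increasing) auto
      moreover have "norm z ^ (m+N) * q \<le> M * t ^ (m+N)"
        using bnd[of "m+N"] by (simp add: q_def norm_mult norm_power mult_ac)
      hence "(norm z / t) ^ (m+N) \<le> M / q"
        using q t by (simp add: power_divide field_simps)
      ultimately show False using m by simp
    qed
  qed
  have "a n = (\<Sum>w\<in>W. \<Sum>j\<in>{j\<in>J. \<omega> j = w}. c j * \<omega> j ^ n)"
    unfolding a_def W_def using fin by (rule sum.image_gen)
  also have "\<dots> = (\<Sum>w\<in>W. w ^ n * D w)"
    unfolding D_def by (intro sum.cong refl) (simp add: sum_distrib_left mult_ac)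
  also have "\<dots> = 0" using Dz by simp
  finally show ?thesis unfolding a_def .
qed

theorem lemma12p7:
  fixes b t :: real and s :: nat and \<omega> c :: "nat \<Rightarrow> complex"
  assumes "b > 0" and "t > 0"
    and "limsup (\<lambda>n. ereal (norm (\<Sum>j\<in>{1..s}. c j * \<omega> j ^ n) / t ^ n)) \<le> ereal b"
  shows "\<exists>J1 J2. J1 \<union> J2 = {1..s} \<and> J1 \<inter> J2 = {}
           \<and> (\<forall>n::nat. n \<ge> 1 \<longrightarrow> (\<Sum>j\<in>J2. c j * \<omega> j ^ n) = 0)
           \<and> (\<forall>j\<in>J1. norm (\<omega> j) \<le> t)"
proof -
  define J1 where "J1 = {j\<in>{1..s}. norm (\<omega> j) \<le> t}"
  define J2 where "J2 = {j\<in>{1..s}. norm (\<omega> j) > t}"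
  have U: "J1 \<union> J2 = {1..s}" "J1 \<inter> J2 = {}" unfolding J1_def J2_def by auto
  have "ereal (b+1) > limsup (\<lambda>n. ereal (norm (\<Sum>j\<in>{1..s}. c j * \<omega> j ^ n) / t ^ n))"
    proof (rule le_less_trans[OF assms(3)])
    show "ereal b < ereal (b+1)" by simp
  qed
  from Limsup_lessD[OF this] have ev1:
    "eventually (\<lambda>n. norm (\<Sum>j\<in>{1..s}. c j * \<omega> j ^ n) \<le> (b+1) * t ^ n) sequentially"
  proof eventually_elim
    case (elim n)
    have tp: "t ^ n > 0" using assms(2) by simp
    from elim have "norm (\<Sum>j\<in>{1..s}. c j * \<omega> j ^ n) / t ^ n < b + 1" by simp
    hence "norm (\<Sum>j\<in>{1..s}. c j * \<omega> j ^ n) < (b+1) * t ^ n"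
      using pos_divide_less_eq[OF tp] by blast
    thus ?case by simp
  qed
  define C where "C = (\<Sum>j\<in>J1. norm (c j))"
  have g: "norm (\<Sum>j\<in>J1. c j * \<omega> j ^ n) \<le> C * t ^ n" for n
  proof -
    have "norm (\<Sum>j\<in>J1. c j * \<omega> j ^ n) \<le> (\<Sum>j\<in>J1. norm (c j) * t ^ n)"
      by (intro order.trans[OF norm_sum] sum_mono)
        (auto simp: J1_def norm_mult norm_power intro!: mult_left_mono power_mono)
    thus ?thesis by (simp add: C_def sum_distrib_right)
  qed
  have split: "(\<Sum>j\<in>{1..s}. c j * \<omega> j ^ n) = (\<Sum>j\<in>J1. c j * \<omega> j ^ n) + (\<Sum>j\<in>J2. c j * \<omega> j ^ n)" for n
    by (subst U(1)[symmetric], rule sum.union_disjoint) (auto simp: J1_def J2_def)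
  have ev2: "eventually (\<lambda>n. norm (\<Sum>j\<in>J2. c j * \<omega> j ^ n) \<le> (b+1+C) * t ^ n) sequentially"
    using ev1
  proof eventually_elim
    case (elim n)
    have "norm (\<Sum>j\<in>J2. c j * \<omega> j ^ n) \<le> norm (\<Sum>j\<in>{1..s}. c j * \<omega> j ^ n) + norm (\<Sum>j\<in>J1. c j * \<omega> j ^ n)"
      using split[of n] by (metis add_diff_cancel_left' norm_triangle_ineq4)
    also have "\<dots> \<le> (b+1) * t ^ n + C * t ^ n" using elim g[of n] by simp
    finally show ?case by (simp add: algebra_simps)
  qed
  have "(\<Sum>j\<in>J2. c j * \<omega> j ^ n) = 0" for n
    by (rule annih[OF _ assms(2) _ ev2]) (auto simp: J2_def)
  thus ?thesis using U J1_def by blast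
qed

end
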